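(* Let $H, W \ge 1$ be integers and $L=HW$. For each $s \in \{0,1,\dots,H+W-2\}$ let $i_{\min}(s)=\max(0,\,s-(W-1))$ and $i_{\max}(s)=\min(s,\,H-1)$. Let $\mathbf{d}^{(s)}$ be the ordered list of points $(i,\,s-i)$ and $\mathbf{a}^{(s)}$ the ordered list of points $(i,\,W-1-(s-i))$, in both cases for $i=i_{\min}(s),\dots,i_{\max}(s)$ in increasing order. Set $\operatorname{diag}(s)=\mathbf{d}^{(s)}$, $\operatorname{antidiag}(s)=\mathbf{a}^{(s)}$ for $s$ even and $\operatorname{diag}(s)=\operatorname{reverse}(\mathbf{d}^{(s)})$, $\operatorname{antidiag}(s)=\operatorname{reverse}(\mathbf{a}^{(s)})$ for $s$ odd. Let $\mathbf{i}_{\text{diag}}$, $\mathbf{i}_{\text{antidiag}}\in\mathbb{Z}^L$ be obtained by concatenating $\operatorname{diag}(s)$, resp. $\operatorname{antidiag}(s)$, over $s=0,\dots,H+W-2$ and replacing each point $(i,j)$ by $iW+j$. Let $\mathbf{I}_{\text{fwd}}\in\mathbb{Z}^{4\times L}$ have rows $\mathbf{i}_{\text{diag}}$, $\mathbf{i}_{\text{antidiag}}$, $\operatorname{flip}(\mathbf{i}_{\text{diag}})$, $\operatorname{flip}(\mathbf{i}_{\text{antidiag}})$ (indexed $k=0,1,2,3$), and let $\mathbf{I}_{\text{inv}}\in\mathbb{Z}^{4\times L}$ be defined by $\mathbf{I}_{\text{inv}}[k,\mathbf{I}_{\text{fwd}}[k,j]]=j$ for all $k\in\{0,1,2,3\}$,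 $j\in\{0,\dots,L-1\}$. Let $\mathbf{z}\in\mathbb{R}^L$ be any vector and for each $k$ define $\mathbf{z}^{\text{scan}}_k\in\mathbb{R}^L$ by $\mathbf{z}^{\text{scan}}_k[j]=\mathbf{z}[\mathbf{I}_{\text{fwd}}[k,j]]$. Then for every $k\in\{0,1,2,3\}$ and every $\ell\in\{0,\dots,L-1\}$, $\mathbf{z}^{\text{scan}}_k[\mathbf{I}_{\text{inv}}[k,\ell]]=\mathbf{z}[\ell]$; that is, $\mathbf{z}^{\text{scan}}_k[\mathbf{I}_{\text{inv}}[k,:]]=\mathbf{z}$.
   Context: The grid is $\{0,\dots,H-1\}\times\{0,\dots,W-1\}$ with points $(i,j)$; $iW+j$ is the row-major (raster) index. $\operatorname{reverse}$ and $\operatorname{flip}$ reverse the order of a finite sequence. Vectors of length $L$ are indexed by $\{0,\dots,L-1\}$, and $\mathbf{v}[\mathbf{u}]$ for an index vector $\mathbf{u}$ denotes the vector with entries $\mathbf{v}[\mathbf{u}[j]]$. *)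

theory Defs
  imports Complex_Main
begin

definition i_min :: "nat \<Rightarrow> nat \<Rightarrow> nat \<Rightarrow> nat" where
  "i_min H W s = nat (max 0 (int s - (int W - 1)))"

definition i_max :: "nat \<Rightarrow> nat \<Rightarrow> nat \<Rightarrow> nat" where
  "i_max H W s = min s (H - 1)"

definition dpts :: "nat \<Rightarrow> nat \<Rightarrow> nat \<Rightarrow> (nat \<times> nat) list" where
  "dpts H W s = map (\<lambda>i. (i, s - i)) [i_min H W s ..< i_max H W s + 1]"

definition apts :: "nat \<Rightarrow> nat \<Rightarrow> nat \<Rightarrow> (nat \<times> nat) list" where
  "apts H W s = map (\<lambda>i. (i, W - 1 - (s - i))) [i_min H W s ..< i_max H W s + 1]"

definition diag :: "nat \<Rightarrow> nat \<Rightarrow> nat \<Rightarrow> (nat \<times> nat) list" where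
  "diag H W s = (if even s then dpts H W s else rev (dpts H W s))"

definition antidiag :: "nat \<Rightarrow> nat \<Rightarrow> nat \<Rightarrow> (nat \<times> nat) list" where
  "antidiag H W s = (if even s then apts H W s else rev (apts H W s))"

definition raster :: "nat \<Rightarrow> nat \<times> nat \<Rightarrow> nat" where
  "raster W p = fst p * W + snd p"

definition i_diag :: "nat \<Rightarrow> nat \<Rightarrow> nat list" where
  "i_diag H W = map (raster W) (concat (map (diag H W) [0 ..< H + W - 1]))"

definition i_antidiag :: "nat \<Rightarrow> nat \<Rightarrow> nat list" where
  "i_antidiag H W = map (raster W) (concat (map (antidiag H W) [0 ..< H + W - 1]))"

definition I_fwd :: "nat \<Rightarrow> nat \<Rightarrow> nat list list" where
  "I_fwd H W = [i_diag H W, i_antidiag H W, rev (i_diag H W), rev (i_antidiag H W)]"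

definition z_scan :: "nat \<Rightarrow> nat \<Rightarrow> real list \<Rightarrow> nat \<Rightarrow> real list" where
  "z_scan H W z k = map (\<lambda>j. z ! (I_fwd H W ! k ! j)) [0 ..< H * W]"

end

theory Submission
  imports Defs
begin

lemma dist_concat_upt:
  assumes "\<And>s. distinct (f s)"
    and "\<And>s t. s \<noteq> t \<Longrightarrow> set (f s) \<inter> set (f t) = {}"
  shows "distinct (concat (map f [a..<b]))"
proof (induction b)
  case 0 then show ?case by simp
next
  case (Suc b)
  show ?case
  proof (cases "a \<le> b")
    case True
    have "\<And>t. t < b \<Longrightarrow> set (f t) \<inter> set (f b) = {}" using assms(2) by auto
    then have "set (concat (map f [a..<b])) \<inter> set (f b) = {}"
      by fastforce
    then show ?thesis using Suc True assms(1) by simp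
  next
    case False then show ?thesis by simp
  qed
qed

lemma set_dpts:
  assumes "H \<ge> 1" "W \<ge> 1"
  shows "set (dpts H W s) = {(i,j). i<H \<and> j<W \<and> i+j=s}"
  using assms unfolding dpts_def i_min_def i_max_def
  by (auto simp: image_iff; rule_tac x=a in exI; simp; linarith)

lemma set_apts:
  assumes "H \<ge> 1" "W \<ge> 1"
  shows "set (apts H W s) = {(i,j). i<H \<and> j<W \<and> i+(W-1-j)=s}"
  using assms unfolding apts_def i_min_def i_max_def
  by (auto simp: image_iff; rule_tac x=a in exI; simp; linarith)

lemma distinct_dpts: "distinct (dpts H W s)"
  unfolding dpts_def by (auto simp: distinct_map inj_on_def)

lemma distinct_apts: "distinct (apts H W s)"
  unfolding apts_def by (auto simp: distinct_map inj_on_def)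

lemma raster_inj: "inj_on (raster W) {(i,j). i<H \<and> j<W}"
proof (rule inj_onI)
  fix p q assume p: "p \<in> {(i,j). i<H \<and> j<W}" and q: "q \<in> {(i,j). i<H \<and> j<W}"
    and e: "raster W p = raster W q"
  obtain a b where pp: "p = (a,b)" "b < W" using p by auto
  obtain c d where qq: "q = (c,d)" "d < W" using q by auto
  have "(a*W+b) div W = (c*W+d) div W" "(a*W+b) mod W = (c*W+d) mod W"
    using e pp qq by (auto simp: raster_def)
  then show "p = q" using pp qq by simp
qed

lemma raster_img: "raster W ` {(i,j). i<H \<and> j<W} = {0..<H*W}"
proof
  show "raster W ` {(i,j). i<H \<and> j<W} \<subseteq> {0..<H*W}"
  proof
    fix x assume "x \<in> raster W ` {(i,j). i<H \<and> j<W}"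
    then obtain i j where x: "x = i*W+j" "i<H" "j<W" by (auto simp: raster_def)
    have "i*W + j < (i+1)*W" using x by simp
    also have "\<dots> \<le> H*W" using x by (intro mult_le_mono1) simp
    finally show "x \<in> {0..<H*W}" using x by simp
  qed
next
  show "{0..<H*W} \<subseteq> raster W ` {(i,j). i<H \<and> j<W}"
  proof
    fix l assume l: "l \<in> {0..<H*W}"
    then have W: "W > 0" by (cases W) auto
    have "l div W < H" using l W by (simp add: div_less_iff_less_mult mult.commute)
    moreover have "l mod W < W" using W by simp
    moreover have "l = raster W (l div W, l mod W)" by (simp add: raster_def)
    ultimately show "l \<in> raster W ` {(i,j). i<H \<and> j<W}" by blast
  qed
qed

lemma perm_row:
  assumes "distinct (concat (map g [0..<H+W-1]))"
    and "set (concat (map g [0..<H+W-1])) = {(i,j). i<H \<and> j<W}"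
  shows "distinct (map (raster W) (concat (map g [0..<H+W-1])))"
    and "set (map (raster W) (concat (map g [0..<H+W-1]))) = {0..<H*W}"
  using assms raster_inj[of W H] raster_img[of W H]
  by (auto simp: distinct_map)

lemma row_diag:
  assumes "H \<ge> 1" "W \<ge> 1"
  shows "distinct (i_diag H W) \<and> set (i_diag H W) = {0..<H*W}"
proof -
  have sd: "set (diag H W s) = {(i,j). i<H \<and> j<W \<and> i+j=s}" for s
    using set_dpts[OF assms] by (simp add: diag_def)
  have d: "distinct (concat (map (diag H W) [0..<H+W-1]))"
    by (rule dist_concat_upt) (simp add: diag_def distinct_dpts, auto simp only: sd)
  have s: "set (concat (map (diag H W) [0..<H+W-1])) = {(i,j). i<H \<and> j<W}"
    using assms by (auto simp: sd)
  show ?thesis using perm_row[OF d s] by (simp add: i_diag_def)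
qed

lemma row_antidiag:
  assumes "H \<ge> 1" "W \<ge> 1"
  shows "distinct (i_antidiag H W) \<and> set (i_antidiag H W) = {0..<H*W}"
proof -
  have sd: "set (antidiag H W s) = {(i,j). i<H \<and> j<W \<and> i+(W-1-j)=s}" for s
    using set_apts[OF assms] by (simp add: antidiag_def)
  have d: "distinct (concat (map (antidiag H W) [0..<H+W-1]))"
    by (rule dist_concat_upt) (simp add: antidiag_def distinct_apts, auto simp only: sd)
  have s: "set (concat (map (antidiag H W) [0..<H+W-1])) = {(i,j). i<H \<and> j<W}"
    using assms by (auto simp: sd)
  show ?thesis using perm_row[OF d s] by (simp add: i_antidiag_def)
qed

lemma rows:
  assumes "H \<ge> 1" "W \<ge> 1" "k < 4"
  shows "distinct (I_fwd H W ! k) \<and> set (I_fwd H W ! k) = {0..<H*W}"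
proof -
  have "k = 0 \<or> k = 1 \<or> k = 2 \<or> k = 3" using assms(3) by auto
  then show ?thesis using row_diag[OF assms(1,2)] row_antidiag[OF assms(1,2)]
    by (auto simp: I_fwd_def)
qed

theorem mainTheorem3:
  fixes H W :: nat and z :: "real list" and I_inv :: "nat \<Rightarrow> nat \<Rightarrow> nat"
  assumes "H \<ge> 1" and "W \<ge> 1"
    and "length z = H * W"
    and "\<forall>k<4. \<forall>j<H * W. I_inv k (I_fwd H W ! k ! j) = j"
  shows "\<forall>k<4. \<forall>l<H * W. z_scan H W z k ! (I_inv k l) = z ! l"
proof (intro allI impI)
  fix k l :: nat assume k: "k < 4" and l: "l < H * W"
  let ?r = "I_fwd H W ! k"
  have r: "distinct ?r" "set ?r = {0..<H*W}" using rows[OF assms(1,2) k] by auto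
  have len: "length ?r = H*W" using distinct_card[OF r(1)] r(2) by simp
  obtain j where j: "j < length ?r" "?r ! j = l" using l r(2)
    by (metis atLeastLessThan_iff in_set_conv_nth zero_le)
  have "I_inv k l = j" using assms(4) k j len by auto
  then show "z_scan H W z k ! (I_inv k l) = z ! l"
    using j len by (simp add: z_scan_def)
qed

end
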